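(* Let $f_{1,\infty}=\{f_n\}_{n=1}^\infty$ be a periodic sequence of continuous maps $f_n:[0,1]\to[0,1]$ (i.e. there is $k\in\mathbb{N}$ with $f_{j+kl}=f_j$ for all $l\in\mathbb{N}$, $1\le j\le k$). If $([0,1],f_{1,\infty})$ is multi-transitive, then it is strongly multi-sensitive.
   Context: Use the usual metric $d$ on $[0,1]$. Write $f_i^n=f_{n+i-1}\circ\cdots\circ f_i$, $f_i^0=\mathrm{id}$, and $f_{1,\infty}^{[k]}=\{f^k_{k(n-1)+1}\}_{n=1}^\infty$ (its $n$-fold composition from index $1$ is $f_1^{kn}$). The system is multi-transitive if for every $m\in\mathbb{N}$ and all nonempty open $U_1,\dots,U_m,V_1,\dots,V_m$ there is $k\in\mathbb{N}$ with $f_1^{ik}(U_i)\cap V_i\ne\varnothing$ for each $i=1,\dots,m$. For $V\subseteq X$, $\delta>0$: $N_{f_{1,\infty}}(V,\delta)=\{n\in\mathbb{N}:\exists u,v\in V,\ d(f_1^n(u),f_1^n(v))>\delta\}$. For $\mathbf{v}=(v_1,\dots,v_r)\in\mathbb{N}^r$, the system is multi-sensitive with respect to $\mathbf{v}$ if there is $\delta>0$ such that $\bigcap_{i=1}^r N_{f_{1,\infty}^{[v_i]}}(U_i,\delta)\ne\varnothing$ for all nonempty open $U_1,\dots,U_r$; it is strongly multi-sensitive if it is multi-sensitive with respect to every vector in $\mathbb{N}^r$, for every $r\in\mathbb{N}$. *)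

theory Defs
  imports "HOL-Analysis.Analysis"
begin

text \<open>A non-autonomous system on [0,1] is a sequence f :: nat => real => real indexed from 1
  (the value f 0 is never used).\<close>

fun comp_seq :: "(nat \<Rightarrow> real \<Rightarrow> real) \<Rightarrow> nat \<Rightarrow> nat \<Rightarrow> real \<Rightarrow> real" where
  "comp_seq f i 0 = id"
| "comp_seq f i (Suc n) = f (i + n) \<circ> comp_seq f i n"

definition block_sys :: "nat \<Rightarrow> (nat \<Rightarrow> real \<Rightarrow> real) \<Rightarrow> nat \<Rightarrow> real \<Rightarrow> real" where
  "block_sys k f n = comp_seq f (k * (n - 1) + 1) k"

definition unit_iv :: "real set" where "unit_iv = {0..1}"

definition nonempty_open :: "real set \<Rightarrow> bool" where
  "nonempty_open U \<longleftrightarrow> openin (top_of_set unit_iv) U \<and> U \<noteq> {}"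

definition cont_seq :: "(nat \<Rightarrow> real \<Rightarrow> real) \<Rightarrow> bool" where
  "cont_seq f \<longleftrightarrow> (\<forall>n\<ge>1. continuous_on unit_iv (f n) \<and> f n ` unit_iv \<subseteq> unit_iv)"

definition periodic_seq :: "(nat \<Rightarrow> real \<Rightarrow> real) \<Rightarrow> bool" where
  "periodic_seq f \<longleftrightarrow> (\<exists>k\<ge>1. \<forall>l\<ge>1. \<forall>j\<in>{1..k}. f (j + k * l) = f j)"

definition multi_transitive :: "(nat \<Rightarrow> real \<Rightarrow> real) \<Rightarrow> bool" where
  "multi_transitive f \<longleftrightarrow>
    (\<forall>m\<ge>1. \<forall>U V :: nat \<Rightarrow> real set.
       (\<forall>i\<in>{1..m}. nonempty_open (U i) \<and> nonempty_open (V i)) \<longrightarrow>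
       (\<exists>k\<ge>1. \<forall>i\<in>{1..m}. comp_seq f 1 (i * k) ` U i \<inter> V i \<noteq> {}))"

definition N_set :: "(nat \<Rightarrow> real \<Rightarrow> real) \<Rightarrow> real set \<Rightarrow> real \<Rightarrow> nat set" where
  "N_set f V \<delta> = {n. n \<ge> 1 \<and> (\<exists>u\<in>V. \<exists>v\<in>V. dist (comp_seq f 1 n u) (comp_seq f 1 n v) > \<delta>)}"

definition multi_sensitive :: "(nat \<Rightarrow> real \<Rightarrow> real) \<Rightarrow> nat \<Rightarrow> (nat \<Rightarrow> nat) \<Rightarrow> bool" where
  "multi_sensitive f r v \<longleftrightarrow>
    (\<exists>\<delta>>0. \<forall>U :: nat \<Rightarrow> real set. (\<forall>i\<in>{1..r}. nonempty_open (U i)) \<longrightarrow>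
        (\<Inter>i\<in>{1..r}. N_set (block_sys (v i) f) (U i) \<delta>) \<noteq> {})"

definition strongly_multi_sensitive :: "(nat \<Rightarrow> real \<Rightarrow> real) \<Rightarrow> bool" where
  "strongly_multi_sensitive f \<longleftrightarrow>
    (\<forall>r\<ge>1. \<forall>v :: nat \<Rightarrow> nat. (\<forall>i\<in>{1..r}. v i \<ge> 1) \<longrightarrow> multi_sensitive f r v)"

end

theory Submission
  imports Defs
begin

lemma comp_seq_add: "comp_seq f i (m + n) = comp_seq f (i + m) n \<circ> comp_seq f i m"
  by (induction n) (auto simp: add.assoc)

lemma comp_seq_cont:
  assumes "cont_seq f" "i \<ge> 1"
  shows "continuous_on {0..1} (comp_seq f i n) \<and> comp_seq f i n ` {0..1} \<subseteq> {0..1}"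
proof (induction n)
  case 0 then show ?case by (simp add: continuous_on_id)
next
  case (Suc n)
  have f: "continuous_on {0..1} (f (i+n))" "f (i+n) ` {0..1} \<subseteq> {0..1}"
    using assms unfolding cont_seq_def unit_iv_def by auto
  have "continuous_on {0..1} (f (i + n) \<circ> comp_seq f i n)"
    by (rule continuous_on_compose) (use Suc f in \<open>auto intro: continuous_on_subset\<close>)
  moreover have "(f (i + n) \<circ> comp_seq f i n) ` {0..1} \<subseteq> {0..1}"
    using Suc f by (auto simp: image_comp[symmetric] image_subset_iff)
  ultimately show ?case by simp
qed

lemma block_comp: "comp_seq (block_sys k f) 1 n = comp_seq f 1 (k*n)"
proof (induction n)
  case 0 then show ?case by simp
next
  case (Suc n)
  have "comp_seq f 1 (k * Suc n) = comp_seq f (1 + k*n) k \<circ> comp_seq f 1 (k*n)"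
    using comp_seq_add[of f 1 "k*n" k] by (simp add: add.commute)
  then show ?case using Suc by (simp add: block_sys_def add.commute)
qed

lemma per_shift:
  fixes f :: "nat \<Rightarrow> 'b" and p i :: nat
  assumes p: "p \<ge> 1" and hp: "\<forall>l\<ge>1. \<forall>j\<in>{1..p}. f (j + p * l) = f j" and i: "i \<ge> 1"
  shows "f (i + p) = f i"
proof -
  define j where "j = (i - 1) mod p + 1"
  define l where "l = (i - 1) div p"
  have e: "p * l + (i-1) mod p = i - 1" unfolding l_def by (rule mult_div_mod_eq)
  have ij: "i = j + p * l" using i e unfolding j_def by linarith
  have "(i - 1) mod p < p" using p by simp
  then have j: "j \<in> {1..p}" unfolding j_def by simp
  have "f (i + p) = f (j + p * (l+1))" using ij by (simp add: algebra_simps)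
  also have "\<dots> = f j" using hp j by (metis le_add2 add.commute)
  also have "\<dots> = f i"
  proof (cases "l = 0")
    case True then show ?thesis using ij by simp
  next
    case False then show ?thesis using ij hp j by simp
  qed
  finally show ?thesis .
qed

lemma comp_seq_shift:
  assumes "p \<ge> 1" "\<forall>l\<ge>1. \<forall>j\<in>{1..p}. f (j + p * l) = f j" "i \<ge> 1"
  shows "comp_seq f (i + p) n = comp_seq f i n"
proof (induction n)
  case 0 then show ?case by simp
next
  case (Suc n)
  have "f (i + p + n) = f (i + n)"
    using per_shift[OF assms(1,2), of "i+n"] assms(3) by (simp add: algebra_simps)
  then show ?case using Suc by simp
qed

lemma comp_seq_shift_mult:
  assumes "p \<ge> 1" "\<forall>l\<ge>1. \<forall>j\<in>{1..p}. f (j + p * l) = f j"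
  shows "comp_seq f (1 + p*t) n = comp_seq f 1 n"
proof (induction t)
  case 0 then show ?case by simp
next
  case (Suc t)
  have "comp_seq f (1 + p * Suc t) n = comp_seq f ((1 + p*t) + p) n" by (simp add: algebra_simps)
  also have "\<dots> = comp_seq f (1 + p*t) n" by (rule comp_seq_shift[OF assms]) simp
  finally show ?case using Suc by simp
qed

lemma comp_per:
  assumes "p \<ge> 1" "\<forall>l\<ge>1. \<forall>j\<in>{1..p}. f (j + p * l) = f j"
  shows "comp_seq f 1 (p*t) = (comp_seq f 1 p)^^t"
proof (induction t)
  case 0 then show ?case by simp
next
  case (Suc t)
  have "comp_seq f 1 (p * Suc t) = comp_seq f (1 + p*t) p \<circ> comp_seq f 1 (p*t)"
    using comp_seq_add[of f 1 "p*t" p] by (simp add: add.commute)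
  also have "\<dots> = comp_seq f 1 p \<circ> (comp_seq f 1 p)^^t"
    using Suc comp_seq_shift_mult[OF assms] by simp
  finally show ?case by simp
qed



lemma nonempty_open_sub: "nonempty_open U \<Longrightarrow> U \<subseteq> {0..1}"
  unfolding nonempty_open_def unit_iv_def by (auto dest: openin_imp_subset)

lemma nonempty_open_Int: "open S \<Longrightarrow> x \<in> S \<Longrightarrow> x \<in> {0..1} \<Longrightarrow> nonempty_open ({0..1} \<inter> S)"
  unfolding nonempty_open_def unit_iv_def by auto

lemma interval_in_open:
  assumes "nonempty_open U"
  shows "\<exists>J. J \<subseteq> U \<and> nonempty_open J \<and> connected J"
proof -
  have U: "U \<subseteq> {0..1}" "\<forall>x\<in>U. \<exists>e>0. \<forall>x'\<in>{0..1}. dist x' x < e \<longrightarrow> x' \<in> U" "U \<noteq> {}"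
    using assms unfolding nonempty_open_def unit_iv_def openin_euclidean_subtopology_iff by auto
  then obtain x where x: "x \<in> U" by auto
  then obtain e where e: "e > 0" "\<forall>x'\<in>{0..1}. dist x' x < e \<longrightarrow> x' \<in> U" using U(2) by blast
  define J where "J = {0..1} \<inter> ball x e"
  have "J \<subseteq> U" using e unfolding J_def by (auto simp: dist_commute)
  moreover have "nonempty_open J" unfolding J_def
    using nonempty_open_Int[of "ball x e" x] x U e by auto
  moreover have "connected J" unfolding J_def
    by (intro convex_connected convex_Int convex_ball) (simp add: convex_real_interval)
  ultimately show ?thesis by blast
qed

lemma mono_chain: fixes h :: "nat \<Rightarrow> real"
  shows "(\<forall>j<k. h j \<le> h (Suc j)) \<Longrightarrow> h 0 \<le> h k"
  by (induction k) (simp, metis less_Suc_eq order_trans)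

lemma fin_pos: fixes g :: "nat \<Rightarrow> real"
  shows "(\<And>r. r < s \<Longrightarrow> g r > 0) \<Longrightarrow> \<exists>\<delta>>0. \<forall>r<s. \<delta> < g r"
proof (induction s)
  case 0 then show ?case by (auto intro: exI[of _ 1])
next
  case (Suc s)
  then obtain d where d: "d > 0" "\<forall>r<s. d < g r" by auto
  have "g s > 0" using Suc by auto
  then show ?case using d
    by (intro exI[of _ "min d (g s / 2)"]) (auto simp: less_Suc_eq)
qed

locale ivmap =
  fixes F :: "real \<Rightarrow> real"
  assumes contF: "continuous_on {0..1} F"
    and mapsF: "F ` {0..1} \<subseteq> {0..1}"
    and TT: "\<And>N U V. N \<ge> 1 \<Longrightarrow> nonempty_open U \<Longrightarrow> nonempty_open V \<Longrightarrow>
               \<exists>k\<ge>1. (F^^(N*k)) ` U \<inter> V \<noteq> {}"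
begin

lemma iter: "continuous_on {0..1} (F^^t) \<and> (F^^t) ` {0..1} \<subseteq> {0..1}"
proof (induction t)
  case 0 then show ?case by (simp add: continuous_on_id)
next
  case (Suc t)
  have "continuous_on {0..1} (F \<circ> F^^t)"
    by (rule continuous_on_compose) (use Suc contF in \<open>auto intro: continuous_on_subset\<close>)
  moreover have "(F \<circ> F^^t) ` {0..1} \<subseteq> {0..1}"
    using Suc mapsF by (auto simp: image_subset_iff)
  ultimately show ?case by simp
qed

lemma iter_in: "x \<in> {0..1} \<Longrightarrow> (F^^t) x \<in> {0..1}"
  using iter by blast

lemma conn_image: "J \<subseteq> {0..1} \<Longrightarrow> connected J \<Longrightarrow> connected ((F^^t) ` J)"
  by (rule connected_continuous_image) (use iter in \<open>auto intro: continuous_on_subset\<close>)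

lemma img_add: "(F^^(a+b)) ` J = (F^^a) ` ((F^^b) ` J)"
  by (simp add: funpow_add image_comp)

lemma exists_down: "\<exists>a. 0 < a \<and> a \<le> 1 \<and> F a < a"
proof -
  obtain k where k: "k \<ge> 1" "(F^^(1*k)) ` ({0..1} \<inter> {1/2<..}) \<inter> ({0..1} \<inter> {..<1/4}) \<noteq> {}"
  proof -
    have "nonempty_open ({0..1} \<inter> {1/2<..})" by (rule nonempty_open_Int[where x=1]) auto
    moreover have "nonempty_open ({0..1} \<inter> {..<1/4})" by (rule nonempty_open_Int[where x=0]) auto
    ultimately show ?thesis using TT[of 1 "{0..1} \<inter> {1/2<..}" "{0..1} \<inter> {..<1/4}"] that by auto
  qed
  then obtain x where x: "x \<in> {0..1}" "x > 1/2" "(F^^k) x < 1/4" by auto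
  have "\<not> (\<forall>j<k. (F^^j) x \<le> (F^^(Suc j)) x)"
    using mono_chain[of k "\<lambda>j. (F^^j) x"] x by auto
  then obtain j where j: "(F^^(Suc j)) x < (F^^j) x" by (auto simp: not_le)
  have "(F^^j) x \<in> {0..1}" "(F^^(Suc j)) x \<in> {0..1}" using x(1) iter_in by blast+
  then show ?thesis using j by (intro exI[of _ "(F^^j) x"]) auto
qed

lemma exists_up: "\<exists>b. 0 \<le> b \<and> b < 1 \<and> F b > b"
proof -
  obtain k where k: "k \<ge> 1" "(F^^(1*k)) ` ({0..1} \<inter> {..<1/2}) \<inter> ({0..1} \<inter> {3/4<..}) \<noteq> {}"
  proof -
    have "nonempty_open ({0..1} \<inter> {..<1/2})" by (rule nonempty_open_Int[where x=0]) auto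
    moreover have "nonempty_open ({0..1} \<inter> {3/4<..})" by (rule nonempty_open_Int[where x=1]) auto
    ultimately show ?thesis using TT[of 1 "{0..1} \<inter> {..<1/2}" "{0..1} \<inter> {3/4<..}"] that by auto
  qed
  then obtain x where x: "x \<in> {0..1}" "x < 1/2" "(F^^k) x > 3/4" by auto
  have "\<not> (\<forall>j<k. - (F^^j) x \<le> - (F^^(Suc j)) x)"
    using mono_chain[of k "\<lambda>j. - (F^^j) x"] x by auto
  then obtain j where j: "(F^^(Suc j)) x > (F^^j) x" by (auto simp: not_le)
  have "(F^^j) x \<in> {0..1}" "(F^^(Suc j)) x \<in> {0..1}" using x(1) iter_in by blast+
  then show ?thesis using j by (intro exI[of _ "(F^^j) x"]) auto
qed

lemma fixed_interior: "\<exists>z. 0 < z \<and> z < 1 \<and> F z = z"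
proof -
  obtain a where a: "0 < a" "a \<le> 1" "F a < a" using exists_down by auto
  obtain b where b: "0 \<le> b" "b < 1" "F b > b" using exists_up by auto
  have gc: "continuous_on {c..d} (\<lambda>y. F y - y)" if "0 \<le> c" "d \<le> 1" for c d
    by (intro continuous_intros continuous_on_subset[OF contF]) (use that in auto)
  show ?thesis
  proof (cases "a < b")
    case True
    obtain x where "a \<le> x" "x \<le> b" "F x - x = 0"
      using IVT'[of "\<lambda>y. F y - y" a 0 b] gc[of a b] a b True by auto
    then show ?thesis using a b by (intro exI[of _ x]) (cases "x = a"; cases "x = b"; auto)
  next
    case False
    then have "b < a" using a b by (cases "a = b") auto
    obtain x where "b \<le> x" "x \<le> a" "F x - x = 0"
      using IVT2'[of "\<lambda>y. F y - y" a 0 b] gc[of b a] a b \<open>b < a\<close> by auto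
    then show ?thesis using a b by (intro exI[of _ x]) (cases "x = a"; cases "x = b"; auto)
  qed
qed

end

context ivmap begin

lemma reach_z:
  assumes z: "0 < z" "z < 1" "F z = z" and J: "nonempty_open J" "connected J"
  shows "\<exists>T. \<forall>t\<ge>T. z \<in> (F^^t) ` J"
proof -
  have J01: "J \<subseteq> {0..1}" using J nonempty_open_sub by auto
  obtain n where n: "n \<ge> 1" "(F^^(1*n)) ` J \<inter> J \<noteq> {}" using TT[of 1, OF _ J(1) J(1)] by auto
  define H where "H M = (\<Union>j\<in>{..M}. (F^^(n*j)) ` J)" for M
  have conH: "connected (H M)" for M
  proof (induction M)
    case 0 then show ?case using J by (simp add: H_def)
  next
    case (Suc M)
    have HS: "H (Suc M) = (F^^(n*Suc M)) ` J \<union> H M" by (simp add: H_def atMost_Suc)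
    obtain y x0 where y: "x0 \<in> J" "y = (F^^n) x0" "y \<in> J" using n by auto
    have "(F^^(n*M)) y \<in> H M" using y unfolding H_def by auto
    moreover have "(F^^(n*M)) y \<in> (F^^(n*Suc M)) ` J"
    proof -
      have "(F^^(n*M)) y = (F^^(n*M + n)) x0" using y by (simp add: funpow_add)
      then show ?thesis using y by (simp add: mult_Suc_right add.commute)
    qed
    ultimately show ?case unfolding HS
      by (intro connected_Un Suc conn_image J01 J) auto
  qed
  have VL: "nonempty_open ({0..1} \<inter> {..<z})" by (rule nonempty_open_Int[where x=0]) (use z in auto)
  have VR: "nonempty_open ({0..1} \<inter> {z<..})" by (rule nonempty_open_Int[where x=1]) (use z in auto)
  obtain k1 where k1: "(F^^(n*k1)) ` J \<inter> ({0..1} \<inter> {..<z}) \<noteq> {}" using TT[OF n(1) J(1) VL] by auto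
  obtain k2 where k2: "(F^^(n*k2)) ` J \<inter> ({0..1} \<inter> {z<..}) \<noteq> {}" using TT[OF n(1) J(1) VR] by auto
  obtain a where a: "a \<in> (F^^(n*k1)) ` J" "a < z" using k1 by auto
  obtain b where b: "b \<in> (F^^(n*k2)) ` J" "b > z" using k2 by auto
  define M where "M = max k1 k2"
  have aH: "a \<in> H M" unfolding H_def using a(1) by (intro UN_I[of k1]) (auto simp: M_def)
  have bH: "b \<in> H M" unfolding H_def using b(1) by (intro UN_I[of k2]) (auto simp: M_def)
  have "z \<in> H M" using conH[of M] aH bH a(2) b(2) unfolding connected_iff_interval
    by (meson less_imp_le)
  then obtain j where j: "z \<in> (F^^(n*j)) ` J" unfolding H_def by auto
  have "z \<in> (F^^(d + n*j)) ` J" for d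
  proof (induction d)
    case 0 then show ?case using j by simp
  next
    case (Suc d)
    then have "F z \<in> F ` (F^^(d + n*j)) ` J" by blast
    then show ?case using z by (simp add: image_comp)
  qed
  show ?thesis
  proof (intro exI allI impI)
    fix t assume "n*j \<le> t"
    then have "t = (t - n*j) + n*j" by simp
    then show "z \<in> (F^^t) ` J" using \<open>\<And>d. z \<in> (F^^(d + n*j)) ` J\<close> by metis
  qed
qed

end

context ivmap begin

lemma cover:
  assumes z: "0 < z" "z < 1" "F z = z" and J: "nonempty_open J" "connected J"
  shows "\<exists>t\<ge>1. {z/2..z} \<subseteq> (F^^t) ` J"
proof -
  have J01: "J \<subseteq> {0..1}" using J nonempty_open_sub by auto
  obtain T where T: "\<forall>t\<ge>T. z \<in> (F^^t) ` J" using reach_z[OF z J] by auto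
  have V: "nonempty_open ({0..1} \<inter> {..<z/2})" by (rule nonempty_open_Int[where x=0]) (use z in auto)
  obtain k where k: "k \<ge> 1" "(F^^((T+1)*k)) ` J \<inter> ({0..1} \<inter> {..<z/2}) \<noteq> {}"
    using TT[of "T+1", OF _ J(1) V] by auto
  define t where "t = (T+1)*k"
  have t: "t \<ge> T+1" unfolding t_def using mult_le_mono2[OF k(1), of "T+1"] by simp
  obtain y where y0: "y \<in> (F^^t) ` J" "y \<in> {0..1} \<inter> {..<z/2}" using k(2) unfolding t_def by blast
  then have y: "y \<in> (F^^t) ` J" "y < z/2" by auto
  have zt: "z \<in> (F^^t) ` J" using T t by auto
  have "{z/2..z} \<subseteq> (F^^t) ` J"
  proof
    fix x assume "x \<in> {z/2..z}"
    then have "y \<le> x" "x \<le> z" using y by auto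
    then show "x \<in> (F^^t) ` J" using conn_image[OF J01 J(2), of t] y(1) zt
      unfolding connected_iff_interval by blast
  qed
  then show ?thesis using t by (intro exI[of _ t]) auto
qed

lemma expand:
  "\<exists>\<delta>>0. \<forall>U. nonempty_open U \<longrightarrow> (\<exists>T. \<forall>t\<ge>T. \<exists>u\<in>U. \<exists>v\<in>U. dist ((F^^t) u) ((F^^t) v) > \<delta>)"
proof -
  obtain z where z: "0 < z" "z < 1" "F z = z" using fixed_interior by auto
  define K where "K = {z/2..z}"
  define IK where "IK = {0..1} \<inter> {z/2<..<z}"
  have IK: "nonempty_open IK" "connected IK" unfolding IK_def
    by (rule nonempty_open_Int[where x="3*z/4"]; use z in auto)
       (intro convex_connected convex_Int; simp add: convex_real_interval)
  have IKK: "IK \<subseteq> K" unfolding IK_def K_def by auto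
  obtain s where s: "s \<ge> 1" "K \<subseteq> (F^^s) ` IK" using cover[OF z IK] unfolding K_def by auto
  then have sK: "K \<subseteq> (F^^s) ` K" using IKK by blast
  have Km: "K \<subseteq> (F^^(m * s)) ` K" for m
  proof (induction m)
    case 0 then show ?case by simp
  next
    case (Suc m)
    have e: "(F^^(Suc m * s)) ` K = (F^^(m * s)) ` ((F^^s) ` K)"
      using img_add[of "m * s" s K] by (simp add: add.commute)
    have "(F^^(m * s)) ` K \<subseteq> (F^^(m * s)) ` ((F^^s) ` K)" using sK by (rule image_mono)
    then show ?case using Suc e by (metis subset_trans)
  qed
  have zK: "z \<in> K" "z/2 \<in> K" unfolding K_def using z by auto
  have nondeg: "\<exists>a\<in>K. \<exists>b\<in>K. (F^^r) a \<noteq> (F^^r) b" if r: "r < s" for r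
  proof (rule ccontr)
    assume "\<not> ?thesis"
    then have c: "\<forall>a\<in>K. (F^^r) a = (F^^r) z" using zK by blast
    have e1: "(F^^s) ` K = (F^^(s-r)) ` ((F^^r) ` K)" using img_add[of "s-r" r K] r by simp
    have e2: "(F^^r) ` K = {(F^^r) z}" using c zK by blast
    have e3: "(F^^s) ` K = {(F^^(s-r)) ((F^^r) z)}" unfolding e1 e2 by simp
    have "z \<in> (F^^s) ` K" "z/2 \<in> (F^^s) ` K" using sK zK by (blast, blast)
    then have "z/2 = z" unfolding e3 by simp
    then show False using z by simp
  qed
  have "\<forall>r\<in>{..<s}. \<exists>a. a \<in> K \<and> (\<exists>b. b \<in> K \<and> (F^^r) a \<noteq> (F^^r) b)" using nondeg by blast
  from bchoice[OF this] obtain a where a: "\<forall>r\<in>{..<s}. a r \<in> K \<and> (\<exists>b. b \<in> K \<and> (F^^r) (a r) \<noteq> (F^^r) b)"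
    by blast
  then have "\<forall>r\<in>{..<s}. \<exists>b. b \<in> K \<and> (F^^r) (a r) \<noteq> (F^^r) b" by blast
  from bchoice[OF this] obtain b where b0: "\<forall>r\<in>{..<s}. b r \<in> K \<and> (F^^r) (a r) \<noteq> (F^^r) (b r)"
    by blast
  have b: "\<forall>r\<in>{..<s}. a r \<in> K \<and> b r \<in> K \<and> (F^^r) (a r) \<noteq> (F^^r) (b r)" using a b0 by blast
  have ab: "\<forall>r<s. a r \<in> K \<and> b r \<in> K \<and> (F^^r) (a r) \<noteq> (F^^r) (b r)" using b by simp
  obtain \<delta> where d: "\<delta> > 0" "\<forall>r<s. \<delta> < dist ((F^^r) (a r)) ((F^^r) (b r))"
    using fin_pos[of s "\<lambda>r. dist ((F^^r) (a r)) ((F^^r) (b r))"] ab by auto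
  have "\<exists>T. \<forall>t\<ge>T. \<exists>u\<in>U. \<exists>v\<in>U. dist ((F^^t) u) ((F^^t) v) > \<delta>" if U: "nonempty_open U" for U
  proof -
    obtain J where J: "J \<subseteq> U" "nonempty_open J" "connected J" using interval_in_open[OF U] by auto
    obtain t0 where t0: "K \<subseteq> (F^^t0) ` J" using cover[OF z J(2,3)] unfolding K_def by auto
    show ?thesis
    proof (intro exI allI impI)
      fix t assume tt: "t0 \<le> t"
      define m where "m = (t - t0) div s"
      define r where "r = (t - t0) mod s"
      have r: "r < s" unfolding r_def using s by simp
      have tdec: "t = r + (m * s + t0)" unfolding m_def r_def using tt
        by (simp add: div_mult_mod_eq[of "t-t0" s] add.commute)
      have img: "(F^^t) ` J = (F^^r) ` ((F^^(m * s)) ` ((F^^t0) ` J))"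
        unfolding tdec img_add ..
      have "K \<subseteq> (F^^(m * s)) ` ((F^^t0) ` J)"
        using Km[of m] image_mono[OF t0, of "F^^(m * s)"] by blast
      then have "(F^^r) (a r) \<in> (F^^t) ` J" "(F^^r) (b r) \<in> (F^^t) ` J"
        unfolding img using ab r by blast+
      then obtain u v where uv: "u \<in> J" "v \<in> J" "(F^^t) u = (F^^r) (a r)" "(F^^t) v = (F^^r) (b r)"
        by (metis imageE)
      have "\<delta> < dist ((F^^t) u) ((F^^t) v)" unfolding uv(3,4) using d(2) r by blast
      then show "\<exists>u\<in>U. \<exists>v\<in>U. dist ((F^^t) u) ((F^^t) v) > \<delta>"
        using J(1) uv(1,2) by blast
    qed
  qed
  then show ?thesis using d(1) by blast
qed

end


lemma fin_common:
  assumes "finite A" "\<forall>i\<in>A. \<exists>T::nat. \<forall>t\<ge>T. P i t"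
  shows "\<exists>T. \<forall>i\<in>A. \<forall>t\<ge>T. P i t"
proof -
  from bchoice[OF assms(2)] obtain Tf where Tf: "\<forall>i\<in>A. \<forall>t\<ge>Tf i. P i t" by blast
  have "Tf i \<le> (\<Sum>j\<in>A. Tf j)" if "i \<in> A" for i
    by (rule member_le_sum) (use that assms(1) in auto)
  then show ?thesis using Tf by (intro exI[of _ "\<Sum>j\<in>A. Tf j"]) (meson order_trans)
qed

theorem mainTheorem3:
  fixes f :: "nat \<Rightarrow> real \<Rightarrow> real"
  assumes "cont_seq f" and "periodic_seq f" and "multi_transitive f"
  shows "strongly_multi_sensitive f"
proof -
  obtain p where p: "p \<ge> 1" "\<forall>l\<ge>1. \<forall>j\<in>{1..p}. f (j + p*l) = f j"
    using assms(2) unfolding periodic_seq_def by auto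
  define F where "F = comp_seq f 1 p"
  have Fc: "continuous_on {0..1} F" "F ` {0..1} \<subseteq> {0..1}"
    using comp_seq_cont[OF assms(1), of 1 p] F_def by auto
  have per: "comp_seq f 1 (p*t) = F^^t" for t using comp_per[OF p] F_def by simp
  have open01: "nonempty_open {0..1}" unfolding nonempty_open_def unit_iv_def by auto
  have mt: "\<forall>m\<ge>1. \<forall>U V :: nat \<Rightarrow> real set.
       (\<forall>i\<in>{1..m}. nonempty_open (U i) \<and> nonempty_open (V i)) \<longrightarrow>
       (\<exists>k\<ge>1. \<forall>i\<in>{1..m}. comp_seq f 1 (i * k) ` U i \<inter> V i \<noteq> {})"
    using assms(3) unfolding multi_transitive_def by blast
  have TT: "\<exists>k\<ge>1. (F^^(N*k)) ` U \<inter> V \<noteq> {}"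
    if N: "N \<ge> 1" and UV: "nonempty_open U" "nonempty_open V" for N U V
  proof -
    define Us where "Us = (\<lambda>i::nat. if i = p*N then U else {0..1::real})"
    define Vs where "Vs = (\<lambda>i::nat. if i = p*N then V else {0..1::real})"
    have pN: "p*N \<ge> 1" using p(1) N by simp
    have "\<forall>i\<in>{1..p*N}. nonempty_open (Us i) \<and> nonempty_open (Vs i)"
      using UV open01 by (auto simp: Us_def Vs_def)
    then obtain k where k: "k \<ge> 1" "\<forall>i\<in>{1..p*N}. comp_seq f 1 (i * k) ` Us i \<inter> Vs i \<noteq> {}"
      using mt pN by blast
    have "p*N \<in> {1..p*N}" using pN by simp
    then have "comp_seq f 1 ((p*N)*k) ` Us (p*N) \<inter> Vs (p*N) \<noteq> {}" using k(2) by blast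
    then have "comp_seq f 1 (p*N*k) ` U \<inter> V \<noteq> {}" by (simp add: Us_def Vs_def)
    moreover have "comp_seq f 1 (p*N*k) = F^^(N*k)" using per[of "N*k"] by (simp add: mult.assoc)
    ultimately show ?thesis using k(1) by auto
  qed
  interpret ivmap F
    by (rule ivmap.intro[OF Fc(1) Fc(2) TT])
  obtain \<delta> where d: "\<delta> > 0"
    "\<forall>U. nonempty_open U \<longrightarrow> (\<exists>T. \<forall>t\<ge>T. \<exists>u\<in>U. \<exists>v\<in>U. dist ((F^^t) u) ((F^^t) v) > \<delta>)"
    using expand by blast
  have "multi_sensitive f r v" if v: "\<forall>i\<in>{1..r}. v i \<ge> 1" for r v
    unfolding multi_sensitive_def
  proof (intro exI[of _ \<delta>] conjI allI impI)
    show "\<delta> > 0" by (rule d(1))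
    fix U :: "nat \<Rightarrow> real set"
    assume U: "\<forall>i\<in>{1..r}. nonempty_open (U i)"
    have "\<forall>i\<in>{1..r}. \<exists>T. \<forall>t\<ge>T. \<exists>u\<in>U i. \<exists>w\<in>U i. dist ((F^^t) u) ((F^^t) w) > \<delta>"
      using U d(2) by blast
    from fin_common[OF finite_atLeastAtMost this]
    obtain T where T: "\<forall>i\<in>{1..r}. \<forall>t\<ge>T. \<exists>u\<in>U i. \<exists>w\<in>U i. dist ((F^^t) u) ((F^^t) w) > \<delta>"
      by blast
    define n where "n = p * (T+1)"
    have "n \<in> N_set (block_sys (v i) f) (U i) \<delta>" if i: "i \<in> {1..r}" for i
    proof -
      have n1: "n \<ge> 1" unfolding n_def using p(1) by simp
      have "comp_seq (block_sys (v i) f) 1 n = comp_seq f 1 (p * (v i * (T+1)))"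
        unfolding block_comp n_def by (simp add: algebra_simps)
      also have "\<dots> = F^^(v i * (T+1))" by (rule per)
      finally have e: "comp_seq (block_sys (v i) f) 1 n = F^^(v i * (T+1))" .
      have vi: "v i \<ge> 1" using v i by blast
      have "T+1 \<le> v i * (T+1)" using mult_le_mono1[OF vi, of "T+1"] by simp
      then have "v i * (T+1) \<ge> T" by simp
      then have "\<exists>u\<in>U i. \<exists>w\<in>U i. dist ((F^^(v i * (T+1))) u) ((F^^(v i * (T+1))) w) > \<delta>"
        using T[rule_format, OF i] by blast
      then show ?thesis unfolding N_set_def mem_Collect_eq e using n1 by blast
    qed
    then have "n \<in> (\<Inter>i\<in>{1..r}. N_set (block_sys (v i) f) (U i) \<delta>)" by blast
    then show "(\<Inter>i\<in>{1..r}. N_set (block_sys (v i) f) (U i) \<delta>) \<noteq> {}" by blast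
  qed
  then show ?thesis unfolding strongly_multi_sensitive_def by blast
qed


end
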